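(* Fix nonnegative real parameters $k^A,k^B,t^A,t^B$ and let $cost(a,b,s)$ be as in the context. Then: (1) for fixed integers $a,b\ge 0$, the function $s\mapsto cost(a,b,s)$ on integers $s\ge 0$ is convex, i.e. its difference function $cost(a,b,s+1)-cost(a,b,s)$ is non-decreasing in $s$; (2) for fixed integers $s,a\ge 0$, the function $b\mapsto cost(a,b,s)$ is non-decreasing on integers $b\ge 0$; (3) for fixed integers $s,b\ge 0$, the function $a\mapsto cost(a,b,s)$ is non-decreasing on integers $a\ge 0$; (4) the function $x\mapsto cost(x,x+1,x+1)$ is non-decreasing on integers $x\ge 0$.
   Context: For integers $a,s\ge 0$ define $cost^A(a,s)=\min\{s\,t^A+k^A(x_1^2+\dots+x_s^2) : x_1+\dots+x_s=a,\ x_i\in\mathbb{Z}_{\ge 0}\}$, with $cost^A(0,0)=0$ and $cost^A(a,0)=+\infty$ for $a>0$; $cost^B(b,s)$ is defined analogously with $t^B,k^B$. Define $mcost^A(a,s)=\min\{cost^A(a,s') : s'\in\{s-1,s,s+1\},\ s'\ge 0\}$ and $cost(a,b,s)=cost^B(b,s)+mcost^A(a,s)$, with the usual conventions for $+\infty$. "Increasing" in the paper means non-decreasing. *)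

theory Defs
  imports Complex_Main "HOL-Library.Extended_Real"
begin

text \<open>The infimum over the empty set is +infinity (the case s = 0, a > 0),
  and for s = 0, a = 0 the only (empty) choice gives 0.\<close>
definition cost_single :: "real \<Rightarrow> real \<Rightarrow> nat \<Rightarrow> nat \<Rightarrow> ereal" where
  "cost_single t k a s =
     (INF x \<in> {x :: nat \<Rightarrow> nat. (\<Sum>i<s. x i) = a}.
        ereal (real s * t + k * (\<Sum>i<s. (real (x i))^2)))"

definition mcost :: "real \<Rightarrow> real \<Rightarrow> nat \<Rightarrow> nat \<Rightarrow> ereal" where
  "mcost t k a s = min (cost_single t k a (s - 1)) (min (cost_single t k a s) (cost_single t k a (s + 1)))"

definition cost :: "real \<Rightarrow> real \<Rightarrow> real \<Rightarrow> real \<Rightarrow> nat \<Rightarrow> nat \<Rightarrow> nat \<Rightarrow> ereal" where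
  "cost tA kA tB kB a b s = cost_single tB kB b s + mcost tA kA a s"

end

theory Submission imports Defs begin

definition Gf :: "nat \<Rightarrow> nat \<Rightarrow> real" where
 "Gf b s = real s * (real (b div s))^2 + real (b mod s) * (2 * real (b div s) + 1)"

lemma sq_lower: "(2*real q + 1) * real x - real q * (real q + 1) \<le> (real x)^2"
proof (cases "x \<le> q")
  case True
  then have "(real x - real q) * (real x - real q - 1) \<ge> 0" by (intro mult_nonpos_nonpos) auto
  then show ?thesis by (simp add: algebra_simps power2_eq_square)
next
  case False
  then have "(real x - real q) * (real x - real q - 1) \<ge> 0" by (intro mult_nonneg_nonneg) auto
  then show ?thesis by (simp add: algebra_simps power2_eq_square)
qed

lemma sum_lower:
  assumes "(\<Sum>i<s. x i) = b"
  shows "(2*real q+1)*real b - real q*(real q+1)*real s \<le> (\<Sum>i<s. (real (x i))^2)"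
proof -
  have "(\<Sum>i<s. (2*real q+1)*real (x i) - real q*(real q+1)) \<le> (\<Sum>i<s. (real (x i))^2)"
    by (rule sum_mono) (rule sq_lower)
  moreover have "real b = (\<Sum>i<s. real (x i))" using assms by auto
  moreover have "(\<Sum>i<s. (2*real q+1)*real (x i) - real q*(real q+1)) = (2*real q+1)*(\<Sum>i<s. real (x i)) - real q*(real q+1)*real s"
    by (simp add: sum_subtractf sum_distrib_left)
  ultimately show ?thesis by simp
qed

lemma Gf_alt: "Gf b s = (2*real (b div s)+1)*real b - real (b div s)*(real (b div s)+1)*real s"
proof -
  have "real b = real s * real (b div s) + real (b mod s)"
    by (metis div_mult_mod_eq of_nat_add of_nat_mult mult.commute)
  then show ?thesis unfolding Gf_def by (simp add: algebra_simps power2_eq_square)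
qed

lemma balanced:
  fixes b s :: nat
  assumes "s > 0"
  defines "x0 \<equiv> (\<lambda>i. b div s + (if i < b mod s then 1 else 0))"
  shows "(\<Sum>i<s. x0 i) = b" "(\<Sum>i<s. (real (x0 i))^2) = Gf b s"
proof -
  have r: "b mod s < s" using assms by simp
  have c: "{..<s} \<inter> {i. i < b mod s} = {..<b mod s}" using r by auto
  have "(\<Sum>i<s. x0 i) = s * (b div s) + (\<Sum>i<s. (if i < b mod s then 1 else 0))"
    unfolding x0_def by (simp add: sum.distrib)
  also have "(\<Sum>i<s. (if i < b mod s then 1 else 0::nat)) = b mod s"
    by (simp add: sum.If_cases c)
  finally show "(\<Sum>i<s. x0 i) = b" by (metis div_mult_mod_eq mult.commute)
  have e: "(real (x0 i))^2 = (real (b div s))^2 + (if i < b mod s then 2*real (b div s)+1 else 0)" for i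
    unfolding x0_def by (simp add: power2_eq_square algebra_simps)
  have "(\<Sum>i<s. (real (x0 i))^2) = real s * (real (b div s))^2 + (\<Sum>i<s. (if i < b mod s then 2*real (b div s)+1 else 0))"
    by (simp add: e sum.distrib)
  also have "(\<Sum>i<s. (if i < b mod s then 2*real (b div s)+1 else 0)) = real (b mod s) * (2*real (b div s)+1)"
    by (simp add: sum.If_cases c)
  finally show "(\<Sum>i<s. (real (x0 i))^2) = Gf b s" unfolding Gf_def .
qed

lemma Gf_ge:
  assumes "s > 0"
  shows "(2*real q+1)*real b - real q*(real q+1)*real s \<le> Gf b s"
  using sum_lower[OF balanced(1)[OF assms], of q] balanced(2)[OF assms] by simp

lemma Gf_convex:
  assumes "s > 0"
  shows "2 * Gf b (s+1) \<le> Gf b s + Gf b (s+2)"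
proof -
  define q where "q = b div (s+1)"
  have 1: "Gf b (s+1) = (2*real q+1)*real b - real q*(real q+1)*real (s+1)"
    unfolding q_def by (rule Gf_alt)
  have 2: "(2*real q+1)*real b - real q*(real q+1)*real s \<le> Gf b s" using Gf_ge[OF assms] .
  have 3: "(2*real q+1)*real b - real q*(real q+1)*real (s+2) \<le> Gf b (s+2)" using Gf_ge[of "s+2" q b] by simp
  show ?thesis using 1 2 3 by (simp add: algebra_simps)
qed

lemma Gf_mono:
  assumes "s > 0"
  shows "Gf b s \<le> Gf (b+1) s"
proof -
  define q where "q = b div s"
  have 1: "Gf b s = (2*real q+1)*real b - real q*(real q+1)*real s"
    unfolding q_def by (rule Gf_alt)
  have 2: "(2*real q+1)*real (b+1) - real q*(real q+1)*real s \<le> Gf (b+1) s" using Gf_ge[OF assms] .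
  show ?thesis using 1 2 by (simp add: algebra_simps)
qed

lemma Gf_small: "s > 0 \<Longrightarrow> b \<le> s \<Longrightarrow> Gf b s = real b"
  by (cases "b = s") (auto simp: Gf_def)

lemma Gf_zero[simp]: "Gf 0 s = 0" by (simp add: Gf_def)

lemma cs_formula:
  assumes "s > 0 \<or> b = 0" "k \<ge> 0"
  shows "cost_single t k b s = ereal (real s * t + k * Gf b s)"
proof (cases "s = 0")
  case True
  then have "b = 0" using assms by simp
  then show ?thesis using True by (simp add: cost_single_def)
next
  case False
  then have sp: "s > 0" by simp
  define x0 where "x0 = (\<lambda>i. b div s + (if i < b mod s then 1 else 0))"
  show ?thesis unfolding cost_single_def
  proof (rule antisym)
    show "(INF x\<in>{x. (\<Sum>i<s. x i) = b}. ereal (real s * t + k * (\<Sum>i<s. (real (x i))\<^sup>2))) \<le> ereal (real s * t + k * Gf b s)"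
      by (rule INF_lower2[of x0]) (use balanced[OF sp] in \<open>auto simp: x0_def\<close>)
    show "ereal (real s * t + k * Gf b s) \<le> (INF x\<in>{x. (\<Sum>i<s. x i) = b}. ereal (real s * t + k * (\<Sum>i<s. (real (x i))\<^sup>2)))"
    proof (rule INF_greatest)
      fix x assume "x \<in> {x. (\<Sum>i<s. x i) = b}"
      then have "Gf b s \<le> (\<Sum>i<s. (real (x i))\<^sup>2)"
        using sum_lower[where s=s and x=x and b=b and q="b div s"] Gf_alt[of b s] by simp
      then show "ereal (real s * t + k * Gf b s) \<le> ereal (real s * t + k * (\<Sum>i<s. (real (x i))\<^sup>2))"
        using assms(2) by (simp add: mult_left_mono)
    qed
  qed
qed

lemma cs_inf: "b > 0 \<Longrightarrow> cost_single t k b 0 = \<infinity>"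
  by (simp add: cost_single_def top_ereal_def[symmetric])


definition cf :: "real \<Rightarrow> real \<Rightarrow> nat \<Rightarrow> nat \<Rightarrow> real" where
  "cf t k a s = real s * t + k * Gf a s"

definition gt :: "real \<Rightarrow> real \<Rightarrow> nat \<Rightarrow> nat \<Rightarrow> real" where
  "gt t k a s = (if s = 0 \<and> a > 0 then max (cf t k a 1) (2 * cf t k a 1 - cf t k a 2) else cf t k a s)"

definition hw :: "(nat \<Rightarrow> real) \<Rightarrow> nat \<Rightarrow> real" where
  "hw g s = min (g (s - 1)) (min (g s) (g (s + 1)))"

lemma mcost_formula:
  assumes "k \<ge> 0"
  shows "mcost t k a s = ereal (hw (gt t k a) s)"
proof (cases "a = 0")
  case True
  then show ?thesis using assms
    by (simp add: mcost_def hw_def gt_def cf_def cs_formula ereal_min)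
next
  case False
  then have ap: "a > 0" by simp
  have g0: "gt t k a 0 \<ge> cf t k a 1" using ap by (simp add: gt_def)
  have gs: "s > 0 \<Longrightarrow> gt t k a s = cf t k a s" for s by (simp add: gt_def)
  have cs: "s > 0 \<Longrightarrow> cost_single t k a s = ereal (cf t k a s)" for s
    using cs_formula assms by (simp add: cf_def)
  consider "s = 0" | "s = 1" | "s \<ge> 2" by linarith
  then show ?thesis
  proof cases
    case 1
    then show ?thesis using g0 ap cs[of 1] gs[of 1] by (simp add: mcost_def hw_def cs_inf)
  next
    case 2
    then show ?thesis using g0 ap cs[of 1] gs[of 1] cs[of 2] gs[of 2]
      by (simp add: mcost_def hw_def cs_inf ereal_min min.assoc[symmetric] numeral_2_eq_2)
  next
    case 3
    then show ?thesis using cs[of "s-1"] gs[of "s-1"] cs[of s] gs[of s] cs[of "s+1"] gs[of "s+1"]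
      by (simp add: mcost_def hw_def ereal_min)
  qed
qed

lemma cf_convex:
  assumes "k \<ge> 0" "s > 0 \<or> a = 0"
  shows "2 * cf t k a (s+1) \<le> cf t k a s + cf t k a (s+2)"
proof (cases "a = 0")
  case True then show ?thesis by (simp add: cf_def algebra_simps)
next
  case False
  then have "s > 0" using assms by simp
  from mult_left_mono[OF Gf_convex[OF this, of a] assms(1)]
  show ?thesis by (simp add: cf_def algebra_simps)
qed

lemma gt_convex:
  assumes "k \<ge> 0"
  shows "2 * gt t k a (s+1) \<le> gt t k a s + gt t k a (s+2)"
proof (cases "s = 0 \<and> a > 0")
  case True
  then show ?thesis by (simp add: gt_def numeral_2_eq_2 max_def)
next
  case False
  then show ?thesis using cf_convex[OF assms, of s a t] by (auto simp: gt_def)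
qed

lemma hw_convex:
  assumes "\<And>s. 2 * g (s+1) \<le> g s + g (s+2)"
  shows "2 * hw g (s+1) \<le> hw g s + hw g (s+2)"
proof (cases s)
  case 0
  have "2 * g (Suc 0) \<le> g 0 + g (Suc (Suc 0))" "2 * g (Suc (Suc 0)) \<le> g (Suc 0) + g (Suc (Suc (Suc 0)))"
    using assms[of 0] assms[of 1] by (simp_all add: numeral_2_eq_2 numeral_3_eq_3)
  then show ?thesis using 0 unfolding hw_def by (auto simp: min_def numeral_2_eq_2)
next
  case (Suc m)
  have "2 * g (m+1) \<le> g m + g (m+2)" "2 * g (m+2) \<le> g (m+1) + g (m+3)" "2 * g (m+3) \<le> g (m+2) + g (m+4)"
    using assms[of m] assms[of "m+1"] assms[of "m+2"] by (simp_all add: numeral_eq_Suc)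
  then show ?thesis using Suc unfolding hw_def by (auto simp: min_def numeral_eq_Suc)
qed

lemma cs_mono:
  assumes "k \<ge> 0"
  shows "cost_single t k b s \<le> cost_single t k (b+1) s"
proof (cases "s = 0")
  case True
  then show ?thesis by (cases "b = 0") (simp_all add: cs_inf)
next
  case False
  then show ?thesis using assms cs_formula[of s b k t] cs_formula[of s "b+1" k t] Gf_mono[of s b]
    by (simp add: mult_left_mono)
qed


lemma cost_fin:
  assumes "kA \<ge> 0" "kB \<ge> 0" "s > 0 \<or> b = 0"
  shows "cost tA kA tB kB a b s = ereal (cf tB kB b s + hw (gt tA kA a) s)"
  using assms by (simp add: cost_def mcost_formula cs_formula cf_def)

lemma cost_inf:
  assumes "kA \<ge> 0" "b > 0"
  shows "cost tA kA tB kB a b 0 = \<infinity>"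
  using assms by (simp add: cost_def mcost_formula cs_inf)

theorem lemma3:
  fixes kA kB tA tB :: real
  assumes "kA \<ge> 0" "kB \<ge> 0" "tA \<ge> 0" "tB \<ge> 0"
  shows "(\<forall>a b. mono (\<lambda>s. cost tA kA tB kB a b (s + 1) - cost tA kA tB kB a b s))
    \<and> (\<forall>s a. mono (\<lambda>b. cost tA kA tB kB a b s))
    \<and> (\<forall>s b. mono (\<lambda>a. cost tA kA tB kB a b s))
    \<and> (mono (\<lambda>x. cost tA kA tB kB x (x + 1) (x + 1)))"
proof (intro conjI allI)
  fix a b :: nat
  show "mono (\<lambda>s. cost tA kA tB kB a b (s + 1) - cost tA kA tB kB a b s)"
    unfolding mono_iff_le_Suc
  proof
    fix s
    show "cost tA kA tB kB a b (s + 1) - cost tA kA tB kB a b s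
        \<le> cost tA kA tB kB a b (Suc s + 1) - cost tA kA tB kB a b (Suc s)"
    proof (cases "s = 0 \<and> b > 0")
      case True
      then show ?thesis using assms cost_inf[of kA b tA tB kB a] cost_fin[of kA kB 1 b tA tB a] by simp
    next
      case False
      then have c: "s > 0 \<or> b = 0" by auto
      have h: "2 * hw (gt tA kA a) (s+1) \<le> hw (gt tA kA a) s + hw (gt tA kA a) (s+2)"
        by (rule hw_convex) (rule gt_convex[OF assms(1)])
      have g: "2 * cf tB kB b (s+1) \<le> cf tB kB b s + cf tB kB b (s+2)"
        by (rule cf_convex[OF assms(2) c])
      show ?thesis using cost_fin[OF assms(1,2) c] cost_fin[OF assms(1,2), of "s+1" b]
          cost_fin[OF assms(1,2), of "s+2" b] h g
        by (simp add: numeral_2_eq_2)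
    qed
  qed
next
  fix s a :: nat
  show "mono (\<lambda>b. cost tA kA tB kB a b s)"
    unfolding mono_iff_le_Suc cost_def
    using cs_mono[OF assms(2)] by (simp add: add_right_mono)
next
  fix s b :: nat
  show "mono (\<lambda>a. cost tA kA tB kB a b s)"
    unfolding mono_iff_le_Suc cost_def mcost_def
    using cs_mono[OF assms(1)] by (auto intro!: add_left_mono min.mono)
next
  have m: "mcost tA kA x (x+1) = ereal (real x * tA + kA * real x)" for x
  proof -
    have e: "cost_single tA kA x s = ereal (real s * tA + kA * real x)" if "s \<ge> x" "s > 0 \<or> x = 0" for s
      using cs_formula[OF that(2) assms(1)] Gf_small[of s x] that by auto
    have "mcost tA kA x (x+1) = min (cost_single tA kA x x) (min (cost_single tA kA x (x+1)) (cost_single tA kA x (x+2)))"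
      by (simp add: mcost_def numeral_2_eq_2)
    also have "\<dots> = ereal (real x * tA + kA * real x)"
      using e[of x] e[of "x+1"] e[of "x+2"] assms(3) by (cases "x = 0") (auto simp: min_def algebra_simps)
    finally show ?thesis .
  qed
  have b: "cost_single tB kB (x+1) (x+1) = ereal (real (x+1) * tB + kB * real (x+1))" for x
    using cs_formula[of "x+1" "x+1" kB tB] Gf_small[of "x+1" "x+1"] assms(2) by simp
  show "mono (\<lambda>x. cost tA kA tB kB x (x + 1) (x + 1))"
    unfolding mono_iff_le_Suc cost_def
    using m b assms by (simp add: algebra_simps add_mono)
qed

end
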